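(* Let $H$ be a graph with $\chi(H)=r\geq 3$ and $\gcd(H)>1$. Then for every integer $n\geq r$ there exists a balanced $r$-partite graph $G$ on $rn$ vertices with $\delta^*(G)\geq \left(1-\frac{1}{\chi^*(H)}\right)n-1=\left(1-\frac1r\right)n-1$ that has no perfect $H$-tiling.
   Context: An $H$-tiling in $G$ is a collection of vertex-disjoint copies of $H$ in $G$; it is perfect if it covers every vertex of $G$. For an $r$-partite graph $G$ with vertex classes $V_1,\dots,V_r$, $G$ is balanced if all classes have the same size, and $\delta^*(G)$ is the largest integer $m$ such that for all $i\neq j$ every vertex of $V_i$ has at least $m$ neighbours in $V_j$. For $H$ with $\chi(H)=r$, let $\mathcal C$ be the set of proper $r$-colourings of $H$ with colour classes $X_1^\phi,\dots,X_r^\phi$, and $\mathcal D(H)=\bigcup_{\phi\in\mathcal C}\{|X_i^\phi|-|X_j^\phi|: i,j\in[r]\}$; $\gcd(H)$ is the greatest common divisor of the elements of $\mathcal D(H)$ if $\mathcal D(H)\ne\{0\}$ and $\infty$ otherwise. $\chi^*(H)=\chi(H)$ when $\gcd(H)\neq 1$. *)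

theory Defs
  imports Main "HOL-Library.Extended_Nat"
begin

definition fin_graph :: "'a set \<Rightarrow> ('a \<Rightarrow> 'a \<Rightarrow> bool) \<Rightarrow> bool" where
  "fin_graph V E \<longleftrightarrow> finite V \<and> (\<forall>u v. E u v \<longrightarrow> E v u) \<and> (\<forall>v. \<not> E v v)
     \<and> (\<forall>u v. E u v \<longrightarrow> u \<in> V \<and> v \<in> V)"

definition proper_colouring :: "'a set \<Rightarrow> ('a \<Rightarrow> 'a \<Rightarrow> bool) \<Rightarrow> nat \<Rightarrow> ('a \<Rightarrow> nat) \<Rightarrow> bool" where
  "proper_colouring V E k c \<longleftrightarrow> (\<forall>v\<in>V. c v < k) \<and> (\<forall>u\<in>V. \<forall>v\<in>V. E u v \<longrightarrow> c u \<noteq> c v)"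

definition chromatic_number :: "'a set \<Rightarrow> ('a \<Rightarrow> 'a \<Rightarrow> bool) \<Rightarrow> nat" where
  "chromatic_number V E = (LEAST k. \<exists>c. proper_colouring V E k c)"

definition colour_class :: "'a set \<Rightarrow> ('a \<Rightarrow> nat) \<Rightarrow> nat \<Rightarrow> 'a set" where
  "colour_class V c i = {v\<in>V. c v = i}"

definition diff_set :: "'a set \<Rightarrow> ('a \<Rightarrow> 'a \<Rightarrow> bool) \<Rightarrow> int set" where
  "diff_set V E = {int (card (colour_class V c i)) - int (card (colour_class V c j)) | c i j.
      proper_colouring V E (chromatic_number V E) c \<and> i < chromatic_number V E \<and> j < chromatic_number V E}"

definition graph_gcd :: "'a set \<Rightarrow> ('a \<Rightarrow> 'a \<Rightarrow> bool) \<Rightarrow> enat" where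
  "graph_gcd V E = (if diff_set V E = {0} then \<infinity> else enat (nat (Gcd (diff_set V E))))"

definition is_copy :: "'b set \<Rightarrow> ('b \<Rightarrow> 'b \<Rightarrow> bool) \<Rightarrow> 'a set \<Rightarrow> ('a \<Rightarrow> 'a \<Rightarrow> bool) \<Rightarrow> ('b \<Rightarrow> 'a) \<Rightarrow> bool" where
  "is_copy VH EH VG EG f \<longleftrightarrow> inj_on f VH \<and> f ` VH \<subseteq> VG \<and> (\<forall>u\<in>VH. \<forall>v\<in>VH. EH u v \<longrightarrow> EG (f u) (f v))"

definition perfect_tiling :: "'b set \<Rightarrow> ('b \<Rightarrow> 'b \<Rightarrow> bool) \<Rightarrow> 'a set \<Rightarrow> ('a \<Rightarrow> 'a \<Rightarrow> bool) \<Rightarrow> bool" where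
  "perfect_tiling VH EH VG EG \<longleftrightarrow> (\<exists>F. (\<forall>f\<in>F. is_copy VH EH VG EG f)
      \<and> (\<forall>f\<in>F. \<forall>g\<in>F. f \<noteq> g \<longrightarrow> f ` VH \<inter> g ` VH = {})
      \<and> (\<Union>f\<in>F. f ` VH) = VG)"

definition part :: "nat \<Rightarrow> nat \<Rightarrow> (nat \<times> nat) set" where
  "part n i = {i} \<times> {..<n}"

definition balanced_rpartite :: "nat \<Rightarrow> nat \<Rightarrow> (nat \<times> nat \<Rightarrow> nat \<times> nat \<Rightarrow> bool) \<Rightarrow> bool" where
  "balanced_rpartite r n E \<longleftrightarrow> fin_graph ({..<r} \<times> {..<n}) E
      \<and> (\<forall>i<r. \<forall>u\<in>part n i. \<forall>v\<in>part n i. \<not> E u v)"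

definition delta_star :: "nat \<Rightarrow> nat \<Rightarrow> (nat \<times> nat \<Rightarrow> nat \<times> nat \<Rightarrow> bool) \<Rightarrow> nat" where
  "delta_star r n E = (GREATEST m. \<forall>i<r. \<forall>j<r. i \<noteq> j \<longrightarrow>
      (\<forall>v\<in>part n i. m \<le> card {u\<in>part n j. E v u}))"

end

theory Submission
  imports Defs "HOL-Number_Theory.Cong"
begin

lemma cnt1:
  assumes "(r::nat) > 0"
  shows "card {y\<in>{..<n}. (j+y) mod r = c} \<le> n div r + 1"
proof -
  let ?S = "{y\<in>{..<n}. (j+y) mod r = c}"
  have inj: "inj_on (\<lambda>y. y div r) ?S"
  proof (rule inj_onI)
    fix y y' assume a: "y \<in> ?S" "y' \<in> ?S" "y div r = y' div r"
    then have "[j + y = j + y'] (mod r)" by (simp add: cong_def)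
    then have "y mod r = y' mod r" using cong_add_lcancel_nat cong_def by blast
    then show "y = y'" using a(3) by (metis div_mult_mod_eq)
  qed
  have "(\<lambda>y. y div r) ` ?S \<subseteq> {..n div r}" by (auto intro: div_le_mono)
  from card_inj_on_le[OF inj this] show ?thesis by simp
qed

lemma cnt2:
  assumes "(r::nat) > 0"
  shows "card {y\<in>{..<n}. (1+y) mod r = 0} \<le> n div r"
proof -
  let ?S = "{y\<in>{..<n}. (1+y) mod r = 0}"
  have inj: "inj_on (\<lambda>y. (1+y) div r) ?S"
  proof (rule inj_onI)
    fix y y' assume a: "y \<in> ?S" "y' \<in> ?S" "(1+y) div r = (1+y') div r"
    have "r dvd 1+y" "r dvd 1+y'" using a by (auto simp: dvd_eq_mod_eq_0)
    then have "1 + y = 1 + y'" using a(3) by (metis dvd_mult_div_cancel)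
    then show "y = y'" by simp
  qed
  have "(\<lambda>y. (1+y) div r) ` ?S \<subseteq> {1..n div r}"
  proof
    fix z assume "z \<in> (\<lambda>y. (1+y) div r) ` ?S"
    then obtain y where y: "y < n" "(1+y) mod r = 0" "z = (1+y) div r" by auto
    have "z \<noteq> 0"
    proof
      assume "z = 0"
      then have "1+y < r" using y assms by (simp add: div_eq_0_iff)
      then show False using y by simp
    qed
    moreover have "z \<le> n div r" using y by (simp add: div_le_mono)
    ultimately show "z \<in> {1..n div r}" by simp
  qed
  from card_inj_on_le[OF inj this] show ?thesis by simp
qed

lemma rot_sum:
  fixes g :: "nat \<Rightarrow> int"
  assumes "(r::nat) > 0"
  shows "(\<Sum>i<r. g ((i+x) mod r)) = (\<Sum>k<r. g k)"
proof -
  have inj: "inj_on (\<lambda>i. (i+x) mod r) {..<r}"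
  proof (rule inj_onI)
    fix i i' assume a: "i \<in> {..<r}" "i' \<in> {..<r}" "(i+x) mod r = (i'+x) mod r"
    then have "[i + x = i' + x] (mod r)" by (simp add: cong_def)
    then have "i mod r = i' mod r" using cong_add_rcancel_nat cong_def by blast
    then show "i = i'" using a by simp
  qed
  have im: "(\<lambda>i. (i+x) mod r) ` {..<r} = {..<r}"
    apply (rule endo_inj_surj) using inj assms by auto
  have "bij_betw (\<lambda>i. (i+x) mod r) {..<r} {..<r}" using inj im by (simp add: bij_betw_def)
  then show ?thesis by (rule sum.reindex_bij_betw)
qed

lemma chrom_pos_nonempty:
  assumes "chromatic_number VH EH \<ge> 3" shows "VH \<noteq> {}"
proof
  assume "VH = {}"
  then have "proper_colouring VH EH 0 (\<lambda>_. 0)" by (simp add: proper_colouring_def)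
  then have "chromatic_number VH EH = 0" unfolding chromatic_number_def by (metis (mono_tags, lifting) Least_eq_0)
  with assms show False by simp
qed

lemma gcd_div:
  assumes "graph_gcd VH EH > 1"
  obtains d :: nat where "d > 1" "\<forall>z\<in>diff_set VH EH. int d dvd z"
proof (cases "diff_set VH EH = {0}")
  case True
  then show ?thesis using that[of 2] by auto
next
  case False
  then have g: "nat (Gcd (diff_set VH EH)) > 1" using assms by (simp add: graph_gcd_def one_enat_def)
  have "\<forall>z\<in>diff_set VH EH. int (nat (Gcd (diff_set VH EH))) dvd z"
    using Gcd_dvd g by auto
  then show ?thesis using that g by blast
qed

theorem mainTheorem8:
  fixes VH :: "'b set" and EH :: "'b \<Rightarrow> 'b \<Rightarrow> bool" and r :: nat
  assumes "fin_graph VH EH"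
    and "chromatic_number VH EH = r" and "r \<ge> 3"
    and "graph_gcd VH EH > 1"
  shows "\<forall>n::nat. n \<ge> r \<longrightarrow>
    (\<exists>EG. balanced_rpartite r n EG
       \<and> real (delta_star r n EG) \<ge> (1 - 1 / real r) * real n - 1
       \<and> \<not> perfect_tiling VH EH ({..<r} \<times> {..<n}) EG)"
proof (intro allI impI)
  fix n :: nat assume nr: "n \<ge> r"
  have r0: "r > 0" using assms(3) by simp
  define VG where "VG = {..<r} \<times> {..<n}"
  define col where "col = (\<lambda>(i::nat,x::nat). if i = 1 \<and> x = 0 then 0 else (i+x) mod r)"
  define EG where "EG = (\<lambda>u v. u \<in> VG \<and> v \<in> VG \<and> fst u \<noteq> fst v \<and> col u \<noteq> col v)"
  have finVG: "finite VG" unfolding VG_def by simp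
  have bal: "balanced_rpartite r n EG"
    unfolding balanced_rpartite_def fin_graph_def EG_def VG_def by (auto simp: Defs.part_def)
  have colr: "col v < r" for v using r0 unfolding col_def by (auto split: prod.splits)
  have cntcol: "card {y\<in>{..<n}. col (j,y) = c} \<le> n div r + 1" for j c
  proof (cases "j = 1 \<and> c = 0")
    case True
    have "{y\<in>{..<n}. col (j,y) = c} \<subseteq> insert 0 {y\<in>{..<n}. (1+y) mod r = 0}"
      using True unfolding col_def by auto
    then have "card {y\<in>{..<n}. col (j,y) = c} \<le> card (insert 0 {y\<in>{..<n}. (1+y) mod r = 0})"
      by (intro card_mono) auto
    also have "\<dots> \<le> card {y\<in>{..<n}. (1+y) mod r = 0} + 1" by (simp add: card_insert_if)
    also have "\<dots> \<le> n div r + 1" using cnt2[OF r0, of n] by simp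
    finally show ?thesis .
  next
    case False
    have "{y\<in>{..<n}. col (j,y) = c} \<subseteq> {y\<in>{..<n}. (j+y) mod r = c}"
      using False assms(3) unfolding col_def by auto
    then have "card {y\<in>{..<n}. col (j,y) = c} \<le> card {y\<in>{..<n}. (j+y) mod r = c}"
      by (intro card_mono) auto
    also have "\<dots> \<le> n div r + 1" using cnt1[OF r0] by simp
    finally show ?thesis .
  qed
  define m0 where "m0 = n - (n div r + 1)"
  have prop0: "\<forall>i<r. \<forall>j<r. i \<noteq> j \<longrightarrow> (\<forall>v\<in>part n i. m0 \<le> card {u\<in>part n j. EG v u})"
  proof (intro allI impI ballI)
    fix i j v assume ij: "i < r" "j < r" "i \<noteq> j" and v: "v \<in> part n i"
    have "part n j - (\<lambda>y. (j,y)) ` {y\<in>{..<n}. col (j,y) = col v} \<subseteq> {u\<in>part n j. EG v u}"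
      using ij v unfolding Defs.part_def EG_def VG_def by auto
    then have "card (part n j - (\<lambda>y. (j,y)) ` {y\<in>{..<n}. col (j,y) = col v}) \<le> card {u\<in>part n j. EG v u}"
      by (intro card_mono) (auto simp: Defs.part_def)
    moreover have "card (part n j - (\<lambda>y. (j,y)) ` {y\<in>{..<n}. col (j,y) = col v}) \<ge> n - (n div r + 1)"
    proof -
      have "card (part n j) - card ((\<lambda>y. (j,y)) ` {y\<in>{..<n}. col (j,y) = col v})
            \<le> card (part n j - (\<lambda>y. (j,y)) ` {y\<in>{..<n}. col (j,y) = col v})"
        by (rule diff_card_le_card_Diff) simp
      moreover have "card (part n j) = n" by (simp add: Defs.part_def)
      moreover have "card ((\<lambda>y. (j,y)) ` {y\<in>{..<n}. col (j,y) = col v}) \<le> n div r + 1"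
        using cntcol[of j "col v"] card_image_le[of "{y\<in>{..<n}. col (j,y) = col v}" "\<lambda>y. (j,y)"] by simp
      ultimately show ?thesis by linarith
    qed
    ultimately show "m0 \<le> card {u\<in>part n j. EG v u}" unfolding m0_def by linarith
  qed
  have bound: "m \<le> n" if "\<forall>i<r. \<forall>j<r. i \<noteq> j \<longrightarrow> (\<forall>v\<in>part n i. m \<le> card {u\<in>part n j. EG v u})" for m
  proof -
    have "(0,0) \<in> part n 0" using nr r0 by (simp add: Defs.part_def)
    then have "m \<le> card {u\<in>part n 1. EG (0,0) u}" using that[rule_format, of 0 1 "(0,0)"] assms(3) by linarith
    also have "\<dots> \<le> card (part n 1)" by (intro card_mono) (auto simp: Defs.part_def)
    finally show ?thesis by (simp add: Defs.part_def)
  qed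
  have ds: "m0 \<le> delta_star r n EG"
    unfolding delta_star_def by (rule Greatest_le_nat[of _ m0 n]) (use prop0 bound in auto)
  have "real (n div r) \<le> real n / real r"
    using r0 by (simp add: of_nat_div_le_of_nat)
  moreover have "n div r + 1 \<le> n"
  proof -
    have "n div r \<le> n div 3" using assms(3) by (simp add: div_le_mono2)
    moreover have "n div 3 + 1 \<le> n" using nr assms(3) by linarith
    ultimately show ?thesis by linarith
  qed
  ultimately have "(1 - 1 / real r) * real n - 1 \<le> real m0"
    unfolding m0_def using r0 by (simp add: of_nat_diff algebra_simps)
  then have deg: "(1 - 1 / real r) * real n - 1 \<le> real (delta_star r n EG)"
    using ds by linarith
  obtain d :: nat where d1: "d > 1" and dd: "\<forall>z\<in>diff_set VH EH. int d dvd z"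
    using gcd_div[OF assms(4)] by blast
  define w where "w = (\<lambda>v. of_bool (col v = 0) - of_bool (col v = 2) :: int)"
  have notile: "\<not> perfect_tiling VH EH VG EG"
  proof
    assume "perfect_tiling VH EH VG EG"
    then obtain F where cp: "\<forall>f\<in>F. is_copy VH EH VG EG f"
      and dj: "\<forall>f\<in>F. \<forall>g\<in>F. f \<noteq> g \<longrightarrow> f ` VH \<inter> g ` VH = {}"
      and un: "(\<Union>f\<in>F. f ` VH) = VG" unfolding perfect_tiling_def by blast
    have ne: "VH \<noteq> {}" using chrom_pos_nonempty assms(2,3) by blast
    have finF: "finite F"
    proof -
      have "inj_on (\<lambda>f. f ` VH) F"
      proof (rule inj_onI)
        fix f g assume "f \<in> F" "g \<in> F" "f ` VH = g ` VH"
        then show "f = g" using dj ne by blast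
      qed
      moreover have "(\<lambda>f. f ` VH) ` F \<subseteq> Pow VG" using un by blast
      ultimately show ?thesis using finVG by (meson finite_Pow_iff finite_imageD finite_subset)
    qed
    have finVH: "finite VH" using assms(1) by (simp add: fin_graph_def)
    have tile: "int d dvd sum w (f ` VH)" if f: "f \<in> F" for f
    proof -
      have c: "is_copy VH EH VG EG f" using cp f by blast
      define c where "c = col \<circ> f"
      have pc: "proper_colouring VH EH r c"
        using c colr unfolding proper_colouring_def is_copy_def EG_def c_def by auto
      have "sum w (f ` VH) = (\<Sum>u\<in>VH. w (f u))"
        using c unfolding is_copy_def by (simp add: sum.reindex)
      also have "\<dots> = int (card (colour_class VH c 0)) - int (card (colour_class VH c 2))"
        unfolding w_def c_def colour_class_def using finVH
        by (simp add: sum_subtractf sum_of_bool_eq Int_def)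
      finally have e: "sum w (f ` VH) = int (card (colour_class VH c 0)) - int (card (colour_class VH c 2))" .
      have "int (card (colour_class VH c 0)) - int (card (colour_class VH c 2)) \<in> diff_set VH EH"
        unfolding diff_set_def using pc assms(2,3) by force
      then show ?thesis using dd e by simp
    qed
    have "sum w VG = (\<Sum>f\<in>F. sum w (f ` VH))"
      unfolding un[symmetric] using finF finVH dj by (intro sum.UNION_disjoint) auto
    then have dvdall: "int d dvd sum w VG" using tile by (simp add: dvd_sum)
    define w0 where "w0 = (\<lambda>k::nat. of_bool (k = 0) - of_bool (k = 2) :: int)"
    have wsplit: "w v = w0 ((fst v + snd v) mod r) + of_bool (v = (1,0))" for v
      using assms(3) unfolding w_def w0_def col_def by (cases v) auto
    have "sum w VG = (\<Sum>v\<in>VG. w0 ((fst v + snd v) mod r)) + (\<Sum>v\<in>VG. of_bool (v = (1,0)))"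
      by (simp add: wsplit sum.distrib)
    moreover have "(\<Sum>v\<in>VG. of_bool (v = (1,0)) :: int) = 1"
    proof -
      have "(1::nat,0::nat) \<in> VG" using assms(3) nr unfolding VG_def by auto
      then have eq: "VG \<inter> {v. v = (1,0)} = {(1,0)}" by auto
      show ?thesis using finVG by (simp only: sum_of_bool_eq eq) simp
    qed
    moreover have "(\<Sum>v\<in>VG. w0 ((fst v + snd v) mod r)) = 0"
    proof -
      have "(\<Sum>v\<in>VG. w0 ((fst v + snd v) mod r)) = (\<Sum>i<r. \<Sum>x<n. w0 ((i + x) mod r))"
        unfolding VG_def by (simp add: sum.cartesian_product case_prod_beta)
      also have "\<dots> = (\<Sum>x<n. \<Sum>i<r. w0 ((i + x) mod r))" by (rule sum.swap)
      also have "\<dots> = (\<Sum>x<n. \<Sum>k<r. w0 k)" using rot_sum[OF r0] by simp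
      also have "(\<Sum>k<r. w0 k) = 0"
      proof -
        have "(\<Sum>k<r. w0 k) = (\<Sum>k<r. of_bool (k = 0)) - (\<Sum>k<r. of_bool (k = 2))"
          unfolding w0_def by (simp add: sum_subtractf)
        also have "\<dots> = 0"
        proof -
          have "{x. x = 0 \<and> x < r} = {0::nat}" "{x. x = 2 \<and> x < r} = {2::nat}" using assms(3) by auto
          then show ?thesis by (simp add: sum_of_bool_eq Int_def)
        qed
        finally show ?thesis .
      qed
      finally show ?thesis by simp
    qed
    ultimately have "sum w VG = 1" by simp
    with dvdall d1 show False by simp
  qed
  show "\<exists>EG. balanced_rpartite r n EG
       \<and> real (delta_star r n EG) \<ge> (1 - 1 / real r) * real n - 1
       \<and> \<not> perfect_tiling VH EH ({..<r} \<times> {..<n}) EG"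
    using bal deg notile unfolding VG_def by blast
qed

end
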